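(* Let $p,q$ be distinct odd primes, and let $C$, $E'$ be as defined in the context, with $C'=C\cap E'$. If $C=C'$, then $p<q$.
   Context: $\zeta_p=e^{2i\pi/p}$, $E=\mathbb{Z}[\zeta_p,1/p]^*=\{u(1-\zeta_p)^k: u\in\mathbb{Z}[\zeta_p]^*,k\in\mathbb{Z}\}$. $C=\{u\in E: u=\frac{1-\zeta_p^i}{1-\zeta_p^j}\,\omega\,(1-\zeta_p)^k$, $\omega$ a root of unity, $i,j\in\mathbb{N}$ (with the quotient defined), $k\in\mathbb{Z}\}$ (the cyclotomic $p$-units). Let $H=\{\alpha\in\mathbb{Q}(\zeta_p)^*: v_{\mathfrak r}(\alpha)\equiv0\pmod q$ for every prime ideal $\mathfrak r\neq(1-\zeta_p)$ of $\mathbb{Z}[\zeta_p]\}/\mathbb{Q}(\zeta_p)^{*q}$, $H'=\{[\alpha]\in H: \alpha=\beta^q+q^2\gamma$ with $\beta,\gamma\in\mathbb{Z}[\zeta_p,1/p]$, $\beta$ invertible modulo $q^2\mathbb{Z}[\zeta_p,1/p]\}$, and $E'=\{u\in E: [u]\in H'\}$. *)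

theory Defs
  imports Complex_Main "HOL-Computational_Algebra.Primes"
begin

definition zeta :: "nat \<Rightarrow> complex" where
  "zeta p = cis (2 * pi / real p)"

definition Zz :: "nat \<Rightarrow> complex set" where
  "Zz p = {(\<Sum>k<n. of_int (a k) * zeta p ^ k) | a n. True}"

definition Zzp :: "nat \<Rightarrow> complex set" where
  "Zzp p = {x / of_nat p ^ n | x n. x \<in> Zz p}"

definition Qz :: "nat \<Rightarrow> complex set" where
  "Qz p = {(\<Sum>k<n. of_rat (a k) * zeta p ^ k) | a n. True}"

definition Eunits :: "nat \<Rightarrow> complex set" where
  "Eunits p = {u \<in> Zzp p. \<exists>v \<in> Zzp p. u * v = 1}"

definition Ccyc :: "nat \<Rightarrow> complex set" where
  "Ccyc p = {u \<in> Eunits p. \<exists>i j :: nat. \<exists>\<omega> :: complex. \<exists>k :: int.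
      1 - zeta p ^ j \<noteq> 0 \<and> (\<exists>n>0. \<omega> ^ n = 1) \<and>
      u = (1 - zeta p ^ i) / (1 - zeta p ^ j) * \<omega> * (1 - zeta p) powi k}"

text \<open>The condition defining H': the class of alpha contains a representative
  beta^q + q^2 gamma with beta, gamma in Z[zeta_p,1/p] and beta invertible modulo q^2.\<close>
definition in_H' :: "nat \<Rightarrow> nat \<Rightarrow> complex \<Rightarrow> bool" where
  "in_H' p q \<alpha> \<longleftrightarrow> (\<exists>\<delta> \<in> Qz p. \<delta> \<noteq> 0 \<and>
      (\<exists>\<beta> \<in> Zzp p. \<exists>\<gamma> \<in> Zzp p.
         \<alpha> * \<delta> ^ q = \<beta> ^ q + (of_nat q)^2 * \<gamma> \<and>
         (\<exists>\<beta>' \<in> Zzp p. \<exists>\<eta> \<in> Zzp p. \<beta> * \<beta>' - 1 = (of_nat q)^2 * \<eta>)))"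

text \<open>E' = units whose class lies in H' (for units the valuation condition of H is automatic).\<close>
definition Eprime :: "nat \<Rightarrow> nat \<Rightarrow> complex set" where
  "Eprime p q = {u \<in> Eunits p. in_H' p q u}"

end

theory Submission
  imports Defs "HOL-Computational_Algebra.Polynomial" "HOL-Number_Theory.Cong"
begin

lemma eisenstein_contra:
  fixes A B :: "int poly" and r :: int
  assumes r: "prime r" and dA: "degree A \<ge> 1" and dB: "degree B \<ge> 1"
    and low: "\<forall>j<degree (A*B). r dvd coeff (A*B) j"
    and lead: "\<not> r dvd lead_coeff (A*B)"
    and c0: "\<not> r^2 dvd coeff (A*B) 0"
  shows False
proof -
  have A0: "A \<noteq> 0" and B0: "B \<noteq> 0" using dA dB by auto
  have degAB: "degree (A*B) = degree A + degree B" using A0 B0 by (simp add: degree_mult_eq)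
  have lAB: "lead_coeff (A*B) = lead_coeff A * lead_coeff B" by (simp add: lead_coeff_mult)
  have lA: "\<not> r dvd lead_coeff A" using lead lAB by auto
  have lB: "\<not> r dvd lead_coeff B" using lead lAB by auto
  define i where "i = (LEAST i. \<not> r dvd coeff A i)"
  define j where "j = (LEAST j. \<not> r dvd coeff B j)"
  have iA: "\<not> r dvd coeff A i" unfolding i_def by (rule LeastI[of _ "degree A"]) (rule lA)
  have jB: "\<not> r dvd coeff B j" unfolding j_def by (rule LeastI[of _ "degree B"]) (rule lB)
  have ile: "i \<le> degree A" unfolding i_def by (rule Least_le) (rule lA)
  have jle: "j \<le> degree B" unfolding j_def by (rule Least_le) (rule lB)
  have bi: "r dvd coeff A k" if "k < i" for k using not_less_Least[of k] that unfolding i_def by blast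
  have bj: "r dvd coeff B k" if "k < j" for k using not_less_Least[of k] that unfolding j_def by blast
  have cm: "coeff (A*B) (i+j) = (\<Sum>k\<le>i+j. coeff A k * coeff B (i+j-k))" by (rule coeff_mult)
  also have "\<dots> = coeff A i * coeff B j + (\<Sum>k\<in>{..i+j}-{i}. coeff A k * coeff B (i+j-k))"
    by (subst sum.remove[of _ i]) auto
  finally have eq: "coeff (A*B) (i+j) = coeff A i * coeff B j + (\<Sum>k\<in>{..i+j}-{i}. coeff A k * coeff B (i+j-k))" .
  have "r dvd (\<Sum>k\<in>{..i+j}-{i}. coeff A k * coeff B (i+j-k))"
  proof (rule dvd_sum)
    fix k assume "k \<in> {..i+j}-{i}"
    then have "k < i \<or> (k > i \<and> i+j-k < j)" by auto
    then show "r dvd coeff A k * coeff B (i+j-k)" using bi bj by auto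
  qed
  moreover have "\<not> r dvd coeff A i * coeff B j" using iA jB r prime_dvd_mult_iff by blast
  ultimately have "\<not> r dvd coeff (A*B) (i+j)" unfolding eq by (simp add: dvd_add_left_iff)
  then have "i + j \<ge> degree (A*B)" using low by (meson not_le)
  then have "i = degree A" "j = degree B" using degAB ile jle by auto
  then have "r dvd coeff A 0" "r dvd coeff B 0" using bi bj dA dB by auto
  then have "r^2 dvd coeff A 0 * coeff B 0" by (simp add: power2_eq_square mult_dvd_mono)
  moreover have "coeff (A*B) 0 = coeff A 0 * coeff B 0" by (simp add: coeff_mult)
  ultimately show False using c0 by simp
qed


definition cp :: "int poly \<Rightarrow> 'a::comm_ring_1 poly" where
  "cp P = map_poly of_int P"

lemma coeff_cp [simp]: "coeff (cp P) n = of_int (coeff P n)"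
  by (simp add: cp_def coeff_map_poly)

lemma cp_add [simp]: "cp (P + Q) = cp P + cp Q"
  by (rule poly_eqI) simp

lemma cp_diff [simp]: "cp (P - Q) = cp P - cp Q"
  by (rule poly_eqI) simp

lemma cp_minus [simp]: "cp (- P) = - cp P"
  by (rule poly_eqI) simp

lemma cp_mult [simp]: "cp (P * Q) = cp P * cp Q"
  by (rule poly_eqI) (simp add: coeff_mult)

lemma cp_smult [simp]: "cp (smult c P) = smult (of_int c) (cp P)"
  by (rule poly_eqI) simp

lemma cp_monom [simp]: "cp (monom c n) = monom (of_int c) n"
  by (rule poly_eqI) (simp add: coeff_monom)

lemma cp_0 [simp]: "cp 0 = 0" by (rule poly_eqI) simp
lemma cp_1 [simp]: "cp 1 = 1" by (rule poly_eqI) (simp add: coeff_1)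

lemma cp_pCons [simp]: "cp (pCons a P) = pCons (of_int a) (cp P)"
  by (rule poly_eqI) (simp add: coeff_pCons split: nat.splits)

lemma cp_power [simp]: "cp (P ^ n) = cp P ^ n"
  by (induction n) simp_all

lemma cp_sum [simp]: "cp (sum f A) = sum (\<lambda>i. cp (f i)) A"
  by (induction A rule: infinite_finite_induct) simp_all

lemma cp_eq_0_iff:
  "(cp P :: complex poly) = 0 \<longleftrightarrow> P = 0"
proof
  assume "(cp P :: complex poly) = 0"
  then have "\<And>n. (of_int (coeff P n) :: complex) = 0" by (metis coeff_0 coeff_cp)
  then show "P = 0" by (simp add: poly_eq_iff)
qed simp

definition Phi :: "nat \<Rightarrow> int poly" where
  "Phi p = (\<Sum>k<p. monom 1 k)"

lemma coeff_Phi: "coeff (Phi p) n = (if n < p then 1 else 0)"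
  by (simp add: Phi_def coeff_sum coeff_monom)

lemma degree_Phi: assumes "p \<ge> 1" shows "degree (Phi p) = p - 1"
proof (rule le_antisym)
  show "degree (Phi p) \<le> p - 1"
    by (rule degree_le) (auto simp: coeff_Phi)
  show "p - 1 \<le> degree (Phi p)"
    by (rule le_degree) (use assms in \<open>auto simp: coeff_Phi\<close>)
qed

lemma lead_Phi: assumes "p \<ge> 1" shows "lead_coeff (Phi p) = 1"
  using assms by (simp add: degree_Phi coeff_Phi)

lemma poly_Phi_root:
  fixes w :: complex
  assumes "w ^ p = 1" "w \<noteq> 1"
  shows "poly (cp (Phi p)) w = 0"
proof -
  have "poly (cp (Phi p)) w = (\<Sum>k<p. w ^ k)"
    by (simp add: Phi_def poly_sum poly_monom)
  also have "\<dots> = 0" using assms by (simp add: geometric_sum)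
  finally show ?thesis .
qed

lemma pcompose_monom1: "pcompose (monom (1::'a::comm_ring_1) k) r = r ^ k"
  by (simp add: pcompose_altdef map_poly_monom poly_monom one_pCons)

lemma coeff_Phi_shift:
  assumes "p \<ge> 1"
  shows "coeff (pcompose (Phi p) [:1,1:]) j = int (p choose Suc j)"
proof -
  have "coeff (pcompose (Phi p) [:1,1:]) j = (\<Sum>k<p. coeff ([:1,1::int:] ^ k) j)"
    by (simp add: Phi_def pcompose_sum coeff_sum pcompose_monom1)
  also have "\<dots> = (\<Sum>k<p. int (k choose j))"
  proof (rule sum.cong)
    fix k assume "k \<in> {..<p}"
    show "coeff ([:1,1::int:] ^ k) j = int (k choose j)"
    proof (cases "j \<le> k")
      case True then show ?thesis by (simp add: coeff_linear_poly_power)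
    next
      case False
      have "degree ([:1,1::int:] ^ k) \<le> k"
        using degree_power_le[of "[:1,1::int:]" k] by simp
      then show ?thesis using False by (simp add: coeff_eq_0)
    qed
  qed simp
  also have "\<dots> = int (\<Sum>k\<le>p-1. k choose j)"
    using assms by (simp add: lessThan_Suc_atMost[symmetric])
  also have "\<dots> = int (p choose Suc j)" using assms by (simp add: sum_choose_upper)
  finally show ?thesis .
qed


lemma poly_cp_smult: "poly (cp (smult c P)) (w::complex) = of_int c * poly (cp P) w"
  by simp

lemma no_small_root:
  fixes w :: complex and U :: "int poly"
  assumes p: "prime p" and w: "w^p = 1" "w \<noteq> 1"
    and U: "U \<noteq> 0" "degree U < p - 1" "poly (cp U) w = 0"
  shows False
proof -
  have p1: "p \<ge> 1" using prime_gt_1_nat[OF p] by simp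
  define P where "P = (\<lambda>d. \<exists>T::int poly. T \<noteq> 0 \<and> poly (cp T) w = 0 \<and> degree T = d)"
  define d0 where "d0 = (LEAST d. P d)"
  have PU: "P (degree U)" using U unfolding P_def by blast
  have "P d0" unfolding d0_def by (rule LeastI[of _ "degree U"]) (rule PU)
  then obtain T0 :: "int poly" where T0: "T0 \<noteq> 0" "poly (cp T0) w = 0" "degree T0 = d0"
    unfolding P_def by blast
  have minim: "d0 \<le> degree T'" if "T' \<noteq> 0" "poly (cp T') w = 0" for T' :: "int poly"
    unfolding d0_def by (rule Least_le) (use that in \<open>auto simp: P_def\<close>)
  have d0U: "d0 \<le> degree U" using minim U by blast
  define T where "T = primitive_part T0"
  have T0eq: "T0 = smult (content T0) T" unfolding T_def by simp
  have cT0: "content T0 \<noteq> 0" using T0 by simp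
  have Tnz: "T \<noteq> 0" using T0 unfolding T_def by simp
  have Troot: "poly (cp T) w = 0"
  proof -
    have "0 = poly (cp T0) w" using T0 by simp
    also have "\<dots> = of_int (content T0) * poly (cp T) w" by (subst T0eq) simp
    finally show ?thesis using cT0 by simp
  qed
  have cT: "content T = 1" unfolding T_def using T0 by simp
  have degT: "degree T = d0" unfolding T_def using T0 by simp
  have degT1: "degree T \<ge> 1"
  proof (rule ccontr)
    assume "\<not> degree T \<ge> 1"
    then have "degree T = 0" by simp
    then obtain c where "T = [:c:]" by (metis degree_eq_zeroE)
    then show False using Tnz Troot by simp
  qed
  obtain S R where sr: "pseudo_divmod (Phi p) T = (S, R)" by (metis surj_pair)
  define c where "c = lead_coeff T ^ (Suc (degree (Phi p)) - degree T)"
  have eq1: "smult c (Phi p) = T * S + R" unfolding c_def by (rule pseudo_divmod(1)[OF Tnz sr])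
  have Rdeg: "R = 0 \<or> degree R < degree T" by (rule pseudo_divmod(2)[OF Tnz sr])
  have cnz: "c \<noteq> 0" unfolding c_def using Tnz by simp
  have "poly (cp (smult c (Phi p))) w = 0" using poly_Phi_root[OF w] by simp
  then have "poly (cp R) w = 0" using Troot unfolding eq1 by simp
  then have R0: "R = 0" using Rdeg minim degT by fastforce
  have eq2: "smult c (Phi p) = T * S" using eq1 R0 by simp
  have cPhi: "content (Phi p) = 1"
  proof -
    have "content (Phi p) dvd 1" using content_dvd_coeff[of "Phi p" "degree (Phi p)"] lead_Phi[OF p1] by simp
    moreover have "content (Phi p) \<ge> 0" by (metis abs_of_nonneg normalize_content abs_ge_zero normalize_int_def)
    ultimately show ?thesis by (simp add: zdvd1_eq)
  qed
  have "content (smult c (Phi p)) = \<bar>c\<bar>" using cPhi by simp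
  moreover have "content (T * S) = content S" using cT by (simp add: content_mult)
  ultimately have cS: "content S = \<bar>c\<bar>" using eq2 by simp
  define B where "B = smult (sgn c) (primitive_part S)"
  have "smult c (Phi p) = smult c (T * B)"
  proof -
    have "smult c (Phi p) = T * smult (content S) (primitive_part S)" using eq2 by simp
    also have "\<dots> = smult \<bar>c\<bar> (T * primitive_part S)" using cS by simp
    also have "\<bar>c\<bar> = c * sgn c" by (simp add: abs_sgn mult.commute)
    finally show ?thesis unfolding B_def by (simp add: mult.commute)
  qed
  then have PhiTB: "Phi p = T * B" using cnz by (simp add: poly_eq_iff)
  have Bnz: "B \<noteq> 0" using PhiTB lead_Phi[OF p1] by auto
  have "p - 1 = degree T + degree B" using degree_Phi[OF p1] PhiTB Tnz Bnz by (simp add: degree_mult_eq)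
  then have degB1: "degree B \<ge> 1" using degT d0U U by linarith
  define A' where "A' = pcompose T [:1,1:]"
  define B' where "B' = pcompose B [:1,1:]"
  have AB': "A' * B' = pcompose (Phi p) [:1,1:]" unfolding A'_def B'_def PhiTB by (simp add: pcompose_mult)
  have degAB': "degree (A' * B') = p - 1" unfolding AB' using degree_Phi[OF p1] by (simp add: degree_pcompose)
  show False
  proof (rule eisenstein_contra[of "int p" A' B'])
    show "prime (int p)" using p by simp
    show "degree A' \<ge> 1" unfolding A'_def using degT1 by (simp add: degree_pcompose)
    show "degree B' \<ge> 1" unfolding B'_def using degB1 by (simp add: degree_pcompose)
    show "\<forall>j<degree (A' * B'). int p dvd coeff (A' * B') j"
    proof (intro allI impI)
      fix j assume "j < degree (A' * B')"
      then have "Suc j < p" using degAB' by simp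
      then have "p dvd (p choose Suc j)" using p by (intro dvd_choose_prime) auto
      then show "int p dvd coeff (A' * B') j" unfolding AB' coeff_Phi_shift[OF p1] by (simp add: int_dvd_int_iff)
    qed
    have "lead_coeff (A' * B') = 1" unfolding degAB' unfolding AB' coeff_Phi_shift[OF p1] using p1 by simp
    then show "\<not> int p dvd lead_coeff (A' * B')" using prime_gt_1_nat[OF p] by simp
    have "coeff (A' * B') 0 = int p" unfolding AB' coeff_Phi_shift[OF p1] by simp
    moreover have "\<not> (int p)^2 dvd int p"
    proof
      assume "(int p)^2 dvd int p"
      then have "(int p)^2 \<le> int p" using p1 by (intro zdvd_imp_le) auto
      then show False using p prime_gt_1_nat[of p] by (simp add: power2_eq_square)
    qed
    ultimately show "\<not> (int p)^2 dvd coeff (A' * B') 0" by simp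
  qed
qed


lemma monic_divide:
  assumes "lead_coeff G = (1::int)" "G \<noteq> 0"
  obtains S U where "R = G * S + U" "U = 0 \<or> degree U < degree G"
proof -
  obtain S U where sr: "pseudo_divmod R G = (S, U)" by (metis surj_pair)
  from pseudo_divmod[OF assms(2) sr] assms(1) show ?thesis using that by simp
qed

definition Bq :: "nat \<Rightarrow> int poly" where
  "Bq q = [:1,1:]^q - 1 - monom 1 q"

lemma poly_Bq: "poly (cp (Bq q)) (w::complex) = (1 + w)^q - 1 - w^q"
  by (simp add: Bq_def poly_monom)

lemma coeff_Bq1: assumes "q \<ge> 2" shows "coeff (Bq q) 1 = int q"
  using assms by (simp add: Bq_def coeff_linear_poly_power coeff_monom coeff_1)

lemma degree_Bq: "degree (Bq q) \<le> q"
proof -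
  have "degree ([:1,1::int:]^q) \<le> q" using degree_power_le[of "[:1,1::int:]" q] by simp
  moreover have "degree (monom (1::int) q) \<le> q" by (simp add: degree_monom_le)
  ultimately show ?thesis unfolding Bq_def
    by (intro degree_diff_le) auto
qed

lemma final_contra:
  fixes w :: complex and W :: "int poly"
  assumes p: "prime p" and q: "prime q" and qp: "q + 2 \<le> p" and w: "w^p = 1" "w \<noteq> 1"
    and eq: "of_nat p ^ m * ((1 + w)^q - 1 - w^q) = (of_nat q)^2 * poly (cp W) w"
  shows False
proof -
  have p1: "p \<ge> 1" using prime_gt_1_nat[OF p] by simp
  have q2: "q \<ge> 2" using prime_ge_2_nat[OF q] .
  have Phinz: "Phi p \<noteq> 0" using lead_Phi[OF p1] by auto
  define R where "R = smult (int p ^ m) (Bq q) - smult (int q ^ 2) W"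
  have Rroot: "poly (cp R) w = 0" unfolding R_def using eq by (simp add: poly_Bq)
  obtain S U where SU: "R = Phi p * S + U" "U = 0 \<or> degree U < degree (Phi p)"
    using monic_divide[OF lead_Phi[OF p1] Phinz] by blast
  have Uroot: "poly (cp U) w = 0" using Rroot poly_Phi_root[OF w] unfolding SU(1) by simp
  have U0: "U = 0"
  proof (rule ccontr)
    assume Unz: "U \<noteq> 0"
    then have "degree U < p - 1" using SU(2) degree_Phi[OF p1] by simp
    from no_small_root[OF p w Unz this Uroot] show False .
  qed
  obtain W1 W2 where W12: "W = Phi p * W1 + W2" "W2 = 0 \<or> degree W2 < degree (Phi p)"
    using monic_divide[OF lead_Phi[OF p1] Phinz] by blast
  define L where "L = smult (int p ^ m) (Bq q) - smult (int q ^ 2) W2"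
  have LR: "L = Phi p * (S + smult (int q ^ 2) W1)"
    using SU(1) U0 unfolding R_def L_def W12(1) by (simp add: algebra_simps smult_add_right)
  have d1: "degree (smult (int p ^ m) (Bq q)) \<le> p - 2"
    by (rule le_trans[OF degree_smult_le]) (use degree_Bq[of q] qp in linarith)
  have d2: "degree (smult (int q ^ 2) W2) \<le> p - 2"
  proof (cases "W2 = 0")
    case False
    then have "degree W2 < p - 1" using W12(2) degree_Phi[OF p1] by auto
    then have "degree W2 \<le> p - 2" by linarith
    then show ?thesis using degree_smult_le[of "int q^2" W2] by linarith
  qed simp
  have degL: "degree L \<le> p - 2" unfolding L_def using d1 d2 by (rule degree_diff_le)
  have L0: "L = 0"
  proof (rule ccontr)
    assume "L \<noteq> 0"
    then have "S + smult (int q ^ 2) W1 \<noteq> 0" using LR by auto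
    then have "degree L \<ge> p - 1" unfolding LR using Phinz degree_Phi[OF p1] by (simp add: degree_mult_eq)
    then show False using degL qp by simp
  qed
  have "coeff L 1 = 0" using L0 by simp
  then have "int p ^ m * int q = int q ^ 2 * coeff W2 1" unfolding L_def using coeff_Bq1[OF q2] by simp
  then have "int p ^ m = int q * coeff W2 1" using q2 by (simp add: power2_eq_square)
  then have "int q dvd int p ^ m" by simp
  then have "q dvd p ^ m" by (metis of_nat_dvd_iff of_nat_power)
  then have "q dvd p" using q prime_dvd_power by blast
  then show False using primes_dvd_imp_eq[OF q p] qp by simp
qed


lemma zeta_pow: "zeta p ^ k = cis (2 * pi * real k / real p)"
  by (simp add: zeta_def DeMoivre mult_ac)

lemma zeta_pow_eq_1_iff:
  assumes "p > 0"
  shows "zeta p ^ k = 1 \<longleftrightarrow> p dvd k"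
proof
  assume "p dvd k"
  then obtain j where "k = p * j" by blast
  then have "2 * pi * real k / real p = 2 * pi * real j" using assms by simp
  then show "zeta p ^ k = 1" by (simp add: zeta_pow)
next
  assume h: "zeta p ^ k = 1"
  then have "cos (2 * pi * real k / real p) = 1"
    by (simp add: zeta_pow complex_eq_iff)
  then obtain n :: int where "2 * pi * real k / real p = n * 2 * pi" by (auto simp: cos_one_2pi_int)
  then have "real k = real_of_int n * real p" using assms by (simp add: field_simps)
  then have "int k = n * int p" by (metis of_int_eq_iff of_int_mult of_int_of_nat_eq)
  then have "int p dvd int k" by simp
  then show "p dvd k" by simp
qed

lemma zeta_pow_p: "p > 0 \<Longrightarrow> zeta p ^ p = 1"
  by (simp add: zeta_pow_eq_1_iff)

lemma zeta_pow_mod: "p > 0 \<Longrightarrow> zeta p ^ k = zeta p ^ (k mod p)"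
proof -
  assume "p > 0"
  have "zeta p ^ k = zeta p ^ (p * (k div p) + k mod p)" by simp
  also have "\<dots> = zeta p ^ (k mod p)" using \<open>p > 0\<close> by (simp only: power_add power_mult zeta_pow_p) simp
  finally show ?thesis .
qed

lemma zeta_ne_1: "p > 1 \<Longrightarrow> zeta p \<noteq> 1"
  using zeta_pow_eq_1_iff[of p 1] by auto

lemma Zz_poly: "x \<in> Zz p \<longleftrightarrow> (\<exists>P. x = poly (cp P) (zeta p))"
proof
  assume "x \<in> Zz p"
  then obtain a n where x: "x = (\<Sum>k<n. of_int (a k) * zeta p ^ k)" unfolding Zz_def by blast
  have "x = poly (cp (\<Sum>k<n. monom (a k) k)) (zeta p)"
    unfolding x by (simp add: poly_sum poly_monom)
  then show "\<exists>P. x = poly (cp P) (zeta p)" by blast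
next
  assume "\<exists>P. x = poly (cp P) (zeta p)"
  then obtain P where "x = poly (cp P) (zeta p)" by blast
  then have "x = (\<Sum>k<Suc (degree P). of_int (coeff P k) * zeta p ^ k)"
    by (simp add: poly_altdef lessThan_Suc_atMost degree_map_poly cp_def coeff_map_poly)
  then show "x \<in> Zz p" unfolding Zz_def by blast
qed

lemma Zz_add: "x \<in> Zz p \<Longrightarrow> y \<in> Zz p \<Longrightarrow> x + y \<in> Zz p"
  unfolding Zz_poly by (metis cp_add poly_add)
lemma Zz_diff: "x \<in> Zz p \<Longrightarrow> y \<in> Zz p \<Longrightarrow> x - y \<in> Zz p"
  unfolding Zz_poly by (metis cp_diff poly_diff)
lemma Zz_mult: "x \<in> Zz p \<Longrightarrow> y \<in> Zz p \<Longrightarrow> x * y \<in> Zz p"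
  unfolding Zz_poly by (metis cp_mult poly_mult)
lemma Zz_of_int: "of_int c \<in> Zz p"
  unfolding Zz_poly by (rule exI[of _ "[:c:]"]) simp
lemma Zz_0: "0 \<in> Zz p" using Zz_of_int[of 0 p] by simp
lemma Zz_1: "1 \<in> Zz p" using Zz_of_int[of 1 p] by simp
lemma Zz_of_nat: "of_nat c \<in> Zz p" using Zz_of_int[of "int c" p] by simp
lemma Zz_zeta: "zeta p \<in> Zz p"
  unfolding Zz_poly by (rule exI[of _ "[:0,1:]"]) simp
lemma Zz_power: "x \<in> Zz p \<Longrightarrow> x ^ n \<in> Zz p"
  by (induction n) (simp_all add: Zz_1 Zz_mult)
lemma Zz_sum: "(\<And>i. i \<in> A \<Longrightarrow> f i \<in> Zz p) \<Longrightarrow> sum f A \<in> Zz p"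
  by (induction A rule: infinite_finite_induct) (simp_all add: Zz_0 Zz_add)

lemma Zz_Zzp: "x \<in> Zz p \<Longrightarrow> x \<in> Zzp p"
  unfolding Zzp_def by (rule CollectI, rule exI[of _ x], rule exI[of _ 0]) simp

lemma Zzp_elim:
  assumes "x \<in> Zzp p" obtains y n where "y \<in> Zz p" "x = y / of_nat p ^ n"
  using assms unfolding Zzp_def by blast

lemma Zzp_intro: "y \<in> Zz p \<Longrightarrow> y / of_nat p ^ n \<in> Zzp p"
  unfolding Zzp_def by blast

lemma Zzp_add: assumes "x \<in> Zzp p" "y \<in> Zzp p" "p > 0" shows "x + y \<in> Zzp p"
proof -
  obtain a m where a: "a \<in> Zz p" "x = a / of_nat p ^ m" using assms(1) by (rule Zzp_elim)
  obtain b n where b: "b \<in> Zz p" "y = b / of_nat p ^ n" using assms(2) by (rule Zzp_elim)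
  have "x + y = (a * of_nat p ^ n + b * of_nat p ^ m) / of_nat p ^ (m + n)"
    using assms(3) by (simp add: a b field_simps power_add)
  moreover have "a * of_nat p ^ n + b * of_nat p ^ m \<in> Zz p"
    using a b by (intro Zz_add Zz_mult Zz_power Zz_of_nat)
  ultimately show ?thesis by (simp add: Zzp_intro)
qed

lemma Zzp_mult: assumes "x \<in> Zzp p" "y \<in> Zzp p" shows "x * y \<in> Zzp p"
proof -
  obtain a m where a: "a \<in> Zz p" "x = a / of_nat p ^ m" using assms(1) by (rule Zzp_elim)
  obtain b n where b: "b \<in> Zz p" "y = b / of_nat p ^ n" using assms(2) by (rule Zzp_elim)
  have "x * y = (a * b) / of_nat p ^ (m + n)"
    by (simp add: a b power_add)
  moreover have "a * b \<in> Zz p" using a b by (intro Zz_mult)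
  ultimately show ?thesis by (simp add: Zzp_intro)
qed

lemma Zzp_of_int: "of_int c \<in> Zzp p" by (intro Zz_Zzp Zz_of_int)
lemma Zzp_of_nat: "of_nat c \<in> Zzp p" by (intro Zz_Zzp Zz_of_nat)
lemma Zzp_0: "0 \<in> Zzp p" by (intro Zz_Zzp Zz_0)
lemma Zzp_1: "1 \<in> Zzp p" by (intro Zz_Zzp Zz_1)
lemma Zzp_zeta: "zeta p \<in> Zzp p" by (intro Zz_Zzp Zz_zeta)
lemma Zzp_uminus: "x \<in> Zzp p \<Longrightarrow> - x \<in> Zzp p"
  using Zzp_mult[of "of_int (-1)" p x] Zzp_of_int[of "-1" p] by simp
lemma Zzp_diff: "x \<in> Zzp p \<Longrightarrow> y \<in> Zzp p \<Longrightarrow> p > 0 \<Longrightarrow> x - y \<in> Zzp p"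
  using Zzp_add[of x p "- y"] Zzp_uminus by simp
lemma Zzp_power: "x \<in> Zzp p \<Longrightarrow> x ^ n \<in> Zzp p"
  by (induction n) (simp_all add: Zzp_1 Zzp_mult)
lemma Zzp_sum: "p > 0 \<Longrightarrow> (\<And>i. i \<in> A \<Longrightarrow> f i \<in> Zzp p) \<Longrightarrow> sum f A \<in> Zzp p"
  by (induction A rule: infinite_finite_induct) (simp_all add: Zzp_0 Zzp_add)
lemma Zzp_inv_p: "1 / of_nat p \<in> Zzp p"
  using Zzp_intro[OF Zz_1, of p 1] by simp


definition cg :: "nat \<Rightarrow> complex \<Rightarrow> complex \<Rightarrow> complex \<Rightarrow> bool" where
  "cg p m x y \<longleftrightarrow> (\<exists>w\<in>Zzp p. x - y = m * w)"

lemma cgI: "w \<in> Zzp p \<Longrightarrow> x - y = m * w \<Longrightarrow> cg p m x y"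
  unfolding cg_def by blast

lemma cgE: assumes "cg p m x y" obtains w where "w \<in> Zzp p" "x - y = m * w"
  using assms unfolding cg_def by blast

lemma cg_refl: "cg p m x x"
  by (rule cgI[OF Zzp_0]) simp

lemma cg_sym: "cg p m x y \<Longrightarrow> cg p m y x"
  by (elim cgE, rule cgI[OF Zzp_uminus]) (auto simp: algebra_simps)

lemma cg_trans: "cg p m x y \<Longrightarrow> cg p m y z \<Longrightarrow> p > 0 \<Longrightarrow> cg p m x z"
proof (elim cgE)
  fix w1 w2 assume "w1 \<in> Zzp p" "x - y = m * w1" "w2 \<in> Zzp p" "y - z = m * w2" "p > 0"
  then show "cg p m x z" by (intro cgI[of "w1 + w2"]) (auto simp: Zzp_add algebra_simps)
qed

lemma cg_add: "cg p m a b \<Longrightarrow> cg p m c d \<Longrightarrow> p > 0 \<Longrightarrow> cg p m (a + c) (b + d)"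
proof (elim cgE)
  fix w1 w2 assume "w1 \<in> Zzp p" "a - b = m * w1" "w2 \<in> Zzp p" "c - d = m * w2" "p > 0"
  then show "cg p m (a + c) (b + d)" by (intro cgI[of "w1 + w2"]) (auto simp: Zzp_add algebra_simps)
qed

lemma cg_diff: "cg p m a b \<Longrightarrow> cg p m c d \<Longrightarrow> p > 0 \<Longrightarrow> cg p m (a - c) (b - d)"
proof (elim cgE)
  fix w1 w2 assume "w1 \<in> Zzp p" "a - b = m * w1" "w2 \<in> Zzp p" "c - d = m * w2" "p > 0"
  then show "cg p m (a - c) (b - d)" by (intro cgI[of "w1 - w2"]) (auto simp: Zzp_diff algebra_simps)
qed

lemma cg_mult:
  assumes "cg p m a b" "cg p m c d" "p > 0" "b \<in> Zzp p" "c \<in> Zzp p"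
  shows "cg p m (a * c) (b * d)"
proof -
  obtain w1 where w1: "w1 \<in> Zzp p" "a - b = m * w1" using assms(1) by (rule cgE)
  obtain w2 where w2: "w2 \<in> Zzp p" "c - d = m * w2" using assms(2) by (rule cgE)
  have "a * c - b * d = (a - b) * c + b * (c - d)" by (simp add: algebra_simps)
  also have "\<dots> = m * (w1 * c + b * w2)" by (simp add: w1 w2 algebra_simps)
  finally show ?thesis using assms w1 w2 by (intro cgI[of "w1 * c + b * w2"]) (auto simp: Zzp_add Zzp_mult)
qed

lemma cg_pow:
  assumes "cg p m x y" "p > 0" "x \<in> Zzp p" "y \<in> Zzp p"
  shows "cg p m (x ^ n) (y ^ n)"
proof -
  obtain w where w: "w \<in> Zzp p" "x - y = m * w" using assms(1) by (rule cgE)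
  define S where "S = (\<Sum>i<n. y^(n - Suc i) * x^i)"
  have S: "S \<in> Zzp p" unfolding S_def using assms by (intro Zzp_sum Zzp_mult Zzp_power) auto
  have "x^n - y^n = m * (w * S)" unfolding S_def power_diff_sumr2 w by simp
  then show ?thesis using w S by (intro cgI[of "w * S"]) (auto simp: Zzp_mult)
qed

lemma cg_sum:
  assumes "\<And>i. i \<in> A \<Longrightarrow> cg p m (f i) (g i)" "p > 0"
  shows "cg p m (sum f A) (sum g A)"
  using assms(1)
proof (induction A rule: infinite_finite_induct)
  case (insert x F)
  then show ?case using assms(2) by (simp add: cg_add)
qed (simp_all add: cg_refl)

lemma cg_weaken: "cg p (m * k) x y \<Longrightarrow> k \<in> Zzp p \<Longrightarrow> cg p m x y"
  by (elim cgE, rule cgI[of "k * _"]) (auto simp: Zzp_mult algebra_simps)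

subsection \<open>Frobenius\<close>

lemma frob_add:
  assumes q: "prime q" and p: "p > 0" and xy: "x \<in> Zzp p" "y \<in> Zzp p"
  shows "cg p (of_nat q) ((x + y)^q) (x^q + y^q)"
proof -
  have q1: "q \<ge> 1" using prime_gt_1_nat[OF q] by simp
  define f where "f k = of_nat (q choose k) * x^k * y^(q-k)" for k
  define g where "g k = of_nat ((q choose k) div q) * x^k * y^(q-k)" for k
  have split: "{..q} = insert 0 (insert q {1..<q})" using q1 by auto
  have "(x + y)^q = (\<Sum>k\<le>q. f k)" unfolding f_def by (rule binomial_ring)
  also have "\<dots> = f 0 + (f q + (\<Sum>k\<in>{1..<q}. f k))" unfolding split using q1
    by (simp add: sum.insert)
  also have "f 0 = y^q" unfolding f_def by simp
  also have "f q = x^q" unfolding f_def by simp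
  also have "(\<Sum>k\<in>{1..<q}. f k) = of_nat q * (\<Sum>k\<in>{1..<q}. g k)"
    unfolding sum_distrib_left
  proof (rule sum.cong)
    fix k assume "k \<in> {1..<q}"
    then have "q dvd (q choose k)" using q by (intro dvd_choose_prime) auto
    then have "(q choose k) = q * ((q choose k) div q)" by simp
    then have "(of_nat (q choose k) :: complex) = of_nat q * of_nat ((q choose k) div q)"
      by (metis of_nat_mult)
    then show "f k = of_nat q * g k" unfolding f_def g_def by simp
  qed simp
  finally have "(x + y)^q - (x^q + y^q) = of_nat q * (\<Sum>k\<in>{1..<q}. g k)" by simp
  moreover have "(\<Sum>k\<in>{1..<q}. g k) \<in> Zzp p" unfolding g_def using p xy
    by (intro Zzp_sum Zzp_mult Zzp_power Zzp_of_nat) auto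
  ultimately show ?thesis by (intro cgI) auto
qed

lemma frob_iter:
  assumes q: "prime q" and p: "p > 0" and xy: "x \<in> Zzp p" "y \<in> Zzp p"
  shows "cg p (of_nat q) ((x + y)^(q^j)) (x^(q^j) + y^(q^j))"
proof (induction j)
  case 0 then show ?case by (simp add: cg_refl)
next
  case (Suc j)
  have xs: "x^(q^j) \<in> Zzp p" "y^(q^j) \<in> Zzp p" "(x+y)^(q^j) \<in> Zzp p"
    using xy p by (auto intro: Zzp_power Zzp_add)
  have "cg p (of_nat q) (((x + y)^(q^j))^q) ((x^(q^j) + y^(q^j))^q)"
    using Suc xs p by (intro cg_pow) (auto intro: Zzp_add)
  moreover have "cg p (of_nat q) ((x^(q^j) + y^(q^j))^q) ((x^(q^j))^q + (y^(q^j))^q)"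
    using xs by (intro frob_add q p)
  ultimately have "cg p (of_nat q) (((x + y)^(q^j))^q) ((x^(q^j))^q + (y^(q^j))^q)"
    using p by (rule cg_trans)
  then show ?case by (simp add: power_mult[symmetric] power_Suc2 mult.commute)
qed

lemma frob_sum:
  assumes q: "prime q" and p: "p > 0" and f: "\<And>i. i \<in> A \<Longrightarrow> f i \<in> Zzp p" and A: "finite A"
  shows "cg p (of_nat q) ((sum f A)^(q^j)) (\<Sum>i\<in>A. f i ^ (q^j))"
  using A f
proof (induction A rule: finite_induct)
  case empty
  have "q > 0" using prime_gt_0_nat[OF q] by simp
  then have z: "(0::complex)^(q^j) = 0" by simp
  show ?case by (simp only: sum.empty z cg_refl)
next
  case (insert x F)
  have "cg p (of_nat q) ((f x + sum f F)^(q^j)) (f x^(q^j) + (sum f F)^(q^j))"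
    using insert p by (intro frob_iter q Zzp_sum) auto
  moreover have "cg p (of_nat q) (f x^(q^j) + (sum f F)^(q^j)) (f x^(q^j) + (\<Sum>i\<in>F. f i ^ (q^j)))"
    using insert p by (intro cg_add cg_refl) auto
  ultimately have "cg p (of_nat q) ((f x + sum f F)^(q^j)) (f x^(q^j) + (\<Sum>i\<in>F. f i ^ (q^j)))"
    using p by (rule cg_trans)
  then show ?case using insert by simp
qed

lemma frob_nat:
  assumes q: "prime q" and p: "p > 0"
  shows "cg p (of_nat q) ((of_nat n)^(q^j)) (of_nat n)"
proof -
  have "cg p (of_nat q) ((\<Sum>i<n. (1::complex))^(q^j)) (\<Sum>i<n. 1 ^ (q^j))"
    by (rule frob_sum[OF q p]) (auto simp: Zzp_1)
  then show ?thesis by simp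
qed

lemma frob_int:
  assumes q: "prime q" "odd q" and p: "p > 0"
  shows "cg p (of_nat q) ((of_int c)^(q^j)) (of_int c)"
proof (cases "c \<ge> 0")
  case True
  then obtain n where "c = int n" by (metis nonneg_eq_int)
  then show ?thesis using frob_nat[OF q(1) p, of n j] by simp
next
  case False
  obtain n where c: "c = - int n" using False by (intro that[of "nat (-c)"]) simp
  have "odd (q^j)" using q(2) by simp
  then have "(of_int c :: complex)^(q^j) = - ((of_nat n)^(q^j))" unfolding c by (simp add: power_minus_odd)
  moreover have "cg p (of_nat q) (- ((of_nat n)^(q^j))) (- of_nat n)"
  proof -
    obtain w where w: "w \<in> Zzp p" "(of_nat n)^(q^j) - of_nat n = (of_nat q :: complex) * w"
      using frob_nat[OF q(1) p, of n j] by (rule cgE)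
    have "- ((of_nat n)^(q^j)) - (- of_nat n) = - ((of_nat n)^(q^j) - (of_nat n :: complex))" by simp
    also have "\<dots> = of_nat q * (- w)" using w(2) by simp
    finally show ?thesis using w(1) by (intro cgI[OF Zzp_uminus])
  qed
  ultimately show ?thesis unfolding c by simp
qed


lemma aux_inv: "(c::complex) \<noteq> 0 \<Longrightarrow> (1/c)^n - 1/c = -(c^n - c) * (1/c)^(n+1)"
  by (simp add: power_one_over field_simps)

lemma fermat_aux:
  assumes p: "prime (p::nat)"
  shows "int p dvd (int n ^ p - int n)"
proof (induction n)
  case 0 then show ?case using prime_gt_0_nat[OF p] by (simp add: power_0_left)
next
  case (Suc n)
  have p1: "p \<ge> 1" using prime_gt_0_nat[OF p] by simp
  define f where "f k = int (p choose k) * int n ^ k * 1 ^ (p - k)" for k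
  have split: "{..p} = insert 0 (insert p {1..<p})" using p1 by auto
  have "(int n + 1) ^ p = (\<Sum>k\<le>p. f k)" unfolding f_def by (rule binomial_ring)
  also have "\<dots> = f 0 + (f p + (\<Sum>k\<in>{1..<p}. f k))" unfolding split using p1
    by (simp add: sum.insert)
  also have "f 0 = 1" unfolding f_def by simp
  also have "f p = int n ^ p" unfolding f_def by simp
  finally have e: "(int n + 1) ^ p = 1 + (int n ^ p + (\<Sum>k\<in>{1..<p}. f k))" .
  have "int p dvd (\<Sum>k\<in>{1..<p}. f k)"
  proof (rule dvd_sum)
    fix k assume "k \<in> {1..<p}"
    then have "p dvd (p choose k)" using p by (intro dvd_choose_prime) auto
    then show "int p dvd f k" unfolding f_def by (simp add: int_dvd_int_iff)
  qed
  moreover have eq2: "int (Suc n) ^ p - int (Suc n) = (int n ^ p - int n) + (\<Sum>k\<in>{1..<p}. f k)"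
    using e by (simp add: add.commute)
  ultimately show ?case unfolding eq2 by (intro dvd_add[OF Suc.IH])
qed

lemma fermat_nat:
  assumes p: "prime (p::nat)" and "\<not> p dvd q"
  shows "q ^ (p - 1) mod p = 1"
proof -
  have p1: "p \<ge> 2" using prime_ge_2_nat[OF p] .
  have "int p dvd int q * (int q ^ (p - 1) - 1)"
  proof -
    have "int q * (int q ^ (p - 1) - 1) = int q ^ p - int q"
      using p1 by (simp add: algebra_simps power_Suc[symmetric])
    then show ?thesis using fermat_aux[OF p, of q] by simp
  qed
  moreover have "\<not> int p dvd int q" using assms(2) by simp
  ultimately have "int p dvd (int q ^ (p - 1) - 1)" using p by (simp add: prime_dvd_mult_iff)
  then obtain c where c: "int q ^ (p - 1) - 1 = int p * c" by (elim dvdE)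
  have qpos: "q > 0" using assms(2) by (intro Nat.gr0I) simp
  have "int (q ^ (p - 1) mod p) = (int q ^ (p - 1)) mod int p" by (simp add: zmod_int)
  also have "\<dots> = (1 + int p * c) mod int p" using c by (simp add: algebra_simps)
  also have "\<dots> = 1" using p1 by simp
  finally show ?thesis by simp
qed

locale pq =
  fixes p q :: nat
  assumes p: "prime p" and q: "prime q" and oq: "odd q" and pq: "p \<noteq> q"
begin

lemma p0: "p > 0" using prime_gt_0_nat[OF p] .
lemma p1: "p > 1" using prime_gt_1_nat[OF p] .
lemma q1: "q > 1" using prime_gt_1_nat[OF q] .

abbreviation "Q \<equiv> q ^ (p - 1)"

lemma zeta_Q: "zeta p ^ (k * Q) = zeta p ^ k"
proof -
  have "\<not> p dvd q" using primes_dvd_imp_eq[OF p q] pq by auto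
  then have "Q mod p = 1" by (rule fermat_nat[OF p])
  then have "zeta p ^ Q = zeta p" using zeta_pow_mod[OF p0, of Q] by simp
  then show ?thesis by (simp add: power_mult mult.commute[of k])
qed

lemma frob_Zz:
  assumes "x \<in> Zz p"
  shows "cg p (of_nat q) (x ^ Q) x"
proof -
  obtain a n where x: "x = (\<Sum>k<n. of_int (a k) * zeta p ^ k)" using assms unfolding Zz_def by blast
  have "cg p (of_nat q) (x ^ Q) (\<Sum>k<n. (of_int (a k) * zeta p ^ k) ^ Q)"
    unfolding x by (rule frob_sum[OF q p0]) (auto intro: Zzp_mult Zzp_of_int Zzp_power Zzp_zeta)
  moreover have "cg p (of_nat q) (\<Sum>k<n. (of_int (a k) * zeta p ^ k) ^ Q) x"
    unfolding x
  proof (rule cg_sum[OF _ p0])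
    fix k
    have "(of_int (a k) * zeta p ^ k) ^ Q = (of_int (a k))^Q * (zeta p ^ k) ^ Q"
      by (simp only: power_mult_distrib)
    also have "(zeta p ^ k) ^ Q = zeta p ^ k" by (simp only: power_mult[symmetric] zeta_Q)
    finally have "(of_int (a k) * zeta p ^ k) ^ Q = (of_int (a k))^Q * zeta p ^ k" .
    moreover have "cg p (of_nat q) ((of_int (a k))^Q * zeta p ^ k) (of_int (a k) * zeta p ^ k)"
      by (rule cg_mult[OF frob_int[OF q oq p0] cg_refl p0]) (auto intro: Zzp_of_int Zzp_power Zzp_zeta)
    ultimately show "cg p (of_nat q) ((of_int (a k) * zeta p ^ k) ^ Q) (of_int (a k) * zeta p ^ k)"
      by simp
  qed
  ultimately show ?thesis using p0 by (rule cg_trans)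
qed

lemma frob_invp: "cg p (of_nat q) ((1 / of_nat p) ^ Q) (1 / of_nat p)"
proof -
  obtain w where w: "w \<in> Zzp p" "(of_nat p)^Q - of_nat p = (of_nat q :: complex) * w"
    using frob_nat[OF q p0, of p "p - 1"] by (rule cgE)
  have pz: "(of_nat p :: complex) \<noteq> 0" using p0 by simp
  have "(1 / of_nat p) ^ Q - 1 / of_nat p = - ((of_nat p)^Q - of_nat p) * (1 / (of_nat p :: complex)) ^ (Q + 1)"
    by (rule aux_inv[OF pz, of Q])
  also have "\<dots> = of_nat q * (- w * (1 / of_nat p) ^ (Q + 1))" using w(2) by simp
  moreover have mem: "- w * (1 / of_nat p) ^ (Q + 1) \<in> Zzp p"
    by (intro Zzp_mult Zzp_uminus Zzp_power Zzp_inv_p w(1))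
  ultimately show ?thesis by (intro cgI[OF mem]) simp
qed

lemma frob_Zzp:
  assumes "x \<in> Zzp p"
  shows "cg p (of_nat q) (x ^ Q) x"
proof -
  obtain y n where y: "y \<in> Zz p" "x = y / of_nat p ^ n" using assms by (rule Zzp_elim)
  have x: "x = y * (1 / of_nat p) ^ n" using y by (simp add: field_simps)
  have "cg p (of_nat q) (y ^ Q * ((1 / of_nat p) ^ Q) ^ n) (y * (1 / of_nat p) ^ n)"
    by (rule cg_mult[OF frob_Zz[OF y(1)] cg_pow[OF frob_invp p0] p0])
       (auto intro: Zz_Zzp y Zzp_power Zzp_inv_p)
  then show ?thesis unfolding x by (simp add: power_mult_distrib power_mult[symmetric] mult.commute)
qed

lemma frob_inj:
  assumes x: "x \<in> Zzp p" and y: "y \<in> Zzp p" and c: "cg p (of_nat q) (x ^ q) (y ^ q)"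
  shows "cg p (of_nat q) x y"
proof -
  have QQ: "Q = q * q ^ (p - 2)" using p1 by (metis Suc_diff_Suc Suc_1 diff_Suc_1 power_Suc)
  have "cg p (of_nat q) ((x ^ q) ^ (q ^ (p - 2))) ((y ^ q) ^ (q ^ (p - 2)))"
    by (rule cg_pow[OF c p0 Zzp_power[OF x] Zzp_power[OF y]])
  then have "cg p (of_nat q) (x ^ Q) (y ^ Q)" unfolding QQ by (simp add: power_mult)
  then have "cg p (of_nat q) x (y ^ Q)" using cg_sym[OF frob_Zzp[OF x]] p0 by (metis cg_trans)
  then show ?thesis using frob_Zzp[OF y] p0 by (metis cg_trans)
qed

lemma lift:
  assumes x: "x \<in> Zzp p" and y: "y \<in> Zzp p" and c: "cg p (of_nat q) x y"
  shows "cg p ((of_nat q)^2) (x ^ q) (y ^ q)"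
proof -
  obtain w where w: "w \<in> Zzp p" "x - y = of_nat q * w" using c by (rule cgE)
  define S where "S = (\<Sum>i<q. y^(q - Suc i) * x^i)"
  have "cg p (of_nat q) S (\<Sum>i<q. y^(q - Suc i) * y^i)"
    unfolding S_def by (rule cg_sum[OF _ p0], rule cg_mult[OF cg_refl cg_pow[OF c p0 x y] p0]) (auto intro: Zzp_power x y)
  also have "(\<Sum>i<q. y^(q - Suc i) * y^i) = of_nat q * y^(q - 1)"
  proof -
    have "(\<Sum>i<q. y^(q - Suc i) * y^i) = (\<Sum>i<q. y^(q - 1))"
      by (rule sum.cong) (auto simp: power_add[symmetric])
    then show ?thesis by simp
  qed
  finally obtain w' where w': "w' \<in> Zzp p" "S - of_nat q * y^(q - 1) = of_nat q * w'" by (rule cgE)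
  have "x^q - y^q = (x - y) * S" unfolding S_def by (rule power_diff_sumr2)
  also have "\<dots> = (of_nat q)^2 * (w * (y^(q - 1) + w'))"
    using w(2) w'(2) by (simp add: algebra_simps power2_eq_square eq_diff_eq)
  finally have eqf: "x^q - y^q = (of_nat q)^2 * (w * (y^(q - 1) + w'))" .
  have mem: "w * (y^(q - 1) + w') \<in> Zzp p"
    using w w' y p0 by (auto intro: Zzp_mult Zzp_add Zzp_power)
  show ?thesis by (rule cgI[OF mem eqf])
qed

end


lemma Qz_denom:
  assumes "\<delta> \<in> Qz p"
  shows "\<exists>N::nat. N > 0 \<and> of_nat N * \<delta> \<in> Zz p"
proof -
  obtain a n where d: "\<delta> = (\<Sum>k<n. of_rat (a k) * zeta p ^ k)" using assms unfolding Qz_def by blast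
  have "\<exists>N::nat. N > 0 \<and> of_nat N * (\<Sum>k<n. of_rat (a k) * zeta p ^ k) \<in> Zz p"
  proof (induction n)
    case 0 then show ?case by (intro exI[of _ 1]) (simp add: Zz_0)
  next
    case (Suc n)
    then obtain N :: nat where N: "N > 0" "of_nat N * (\<Sum>k<n. of_rat (a k) * zeta p ^ k) \<in> Zz p" by blast
    obtain u d where ud: "quotient_of (a n) = (u, d)" by (metis surj_pair)
    have d0: "d > 0" using quotient_of_denom_pos[OF ud] .
    have an: "(of_rat (a n) :: complex) = of_int u / of_int d" using quotient_of_div[OF ud]
      by (simp add: of_rat_divide)
    define N' where "N' = N * nat d"
    have "of_nat N' * (\<Sum>k<Suc n. of_rat (a k) * zeta p ^ k) =
       of_int d * (of_nat N * (\<Sum>k<n. of_rat (a k) * zeta p ^ k)) + of_nat N * of_int u * zeta p ^ n"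
      using d0 unfolding N'_def by (simp add: an field_simps)
    also have "\<dots> \<in> Zz p" by (rule Zz_add[OF Zz_mult[OF Zz_of_int N(2)] Zz_mult[OF Zz_mult[OF Zz_of_nat Zz_of_int] Zz_power[OF Zz_zeta]]])
    finally show ?case using N(1) d0 unfolding N'_def by (intro exI[of _ "N * nat d"]) simp
  qed
  then show ?thesis unfolding d .
qed

lemma nat_decomp:
  fixes q :: nat assumes "q > 1" shows "N > 0 \<Longrightarrow> \<exists>a M. N = q ^ a * M \<and> \<not> q dvd M"
proof (induction N rule: less_induct)
  case (less N)
  show ?case
  proof (cases "q dvd N")
    case True
    then obtain N1 where N1: "N = q * N1" by blast
    then have "N1 < N" "N1 > 0" using less.prems assms by auto
    then obtain a M where "N1 = q ^ a * M" "\<not> q dvd M" using less.IH by blast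
    then show ?thesis using N1 by (intro exI[of _ "Suc a"] exI[of _ M]) simp
  next
    case False
    then show ?thesis by (intro exI[of _ 0] exI[of _ N]) simp
  qed
qed

context pq
begin

lemma descent:
  assumes v: "v \<in> Zzp p" and av: "\<alpha> * v = 1"
  shows "d \<in> Zzp p \<Longrightarrow> Y \<in> Zzp p \<Longrightarrow> \<alpha> * d ^ q = (of_nat q)^(a * q) * Y \<Longrightarrow> d / (of_nat q)^a \<in> Zzp p"
proof (induction a arbitrary: d)
  case 0 then show ?case by simp
next
  case (Suc a)
  have qz: "(of_nat q :: complex) \<noteq> 0" using q1 by simp
  have "d ^ q = v * (\<alpha> * d ^ q)" using av by (simp add: algebra_simps)
  also have "\<dots> = of_nat q * (v * (of_nat q)^(q - 1 + a * q) * Y)"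
  proof -
    have e: "Suc a * q = Suc (q - 1 + a * q)" using q1 by simp
    have e2: "(of_nat q::complex)^(Suc a * q) = of_nat q * (of_nat q)^(q - 1 + a * q)"
      by (simp only: e power_Suc)
    show ?thesis unfolding Suc.prems(3) e2 by (simp only: mult_ac)
  qed
  finally have eq: "d ^ q - 0 ^ q = of_nat q * (v * (of_nat q)^(q - 1 + a * q) * Y)" using q1 by simp
  have mem: "v * (of_nat q)^(q - 1 + a * q) * Y \<in> Zzp p" using v Suc.prems(2)
    by (intro Zzp_mult Zzp_power Zzp_of_nat)
  have "cg p (of_nat q) (d ^ q) (0 ^ q)" by (rule cgI[OF mem eq])
  then have "cg p (of_nat q) d 0" by (rule frob_inj[OF Suc.prems(1) Zzp_0])
  then obtain d1 where d1: "d1 \<in> Zzp p" "d = of_nat q * d1" by (elim cgE) simp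
  have "(of_nat q)^q * (\<alpha> * d1 ^ q) = (of_nat q)^q * ((of_nat q)^(a * q) * Y)"
    using Suc.prems(3) unfolding d1(2) by (simp add: power_mult_distrib power_add algebra_simps)
  then have "\<alpha> * d1 ^ q = (of_nat q)^(a * q) * Y" using qz by simp
  then have "d1 / (of_nat q)^a \<in> Zzp p" using Suc.IH d1(1) Suc.prems(2) by blast
  moreover have "d / (of_nat q)^(Suc a) = d1 / (of_nat q)^a" using qz unfolding d1(2) by simp
  ultimately show ?case by simp
qed

end


theorem mainTheorem17:
  fixes p q :: nat
  assumes "prime p" and "prime q" and "odd p" and "odd q" and "p \<noteq> q"
    and "Ccyc p = Ccyc p \<inter> Eprime p q"
  shows "p < q"
proof (rule ccontr)
  assume "\<not> p < q"
  then have qp: "q < p" using assms(5) by simp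
  interpret pq p q using assms by unfold_locales auto
  have qp2: "q + 2 \<le> p" using qp assms(3,4) by presburger
  define z where "z = zeta p"
  have z: "z \<in> Zzp p" unfolding z_def by (rule Zzp_zeta)
  have zq: "z ^ q \<noteq> 1" unfolding z_def zeta_pow_eq_1_iff[OF p0]
    using primes_dvd_imp_eq[OF p q] assms(5) by auto
  have z2q: "z ^ (2 * q) \<noteq> 1" unfolding z_def zeta_pow_eq_1_iff[OF p0]
  proof
    assume "p dvd 2 * q"
    then have "p dvd 2 \<or> p dvd q" using p prime_dvd_mult_iff by blast
    moreover have "\<not> p dvd 2"
    proof
      assume "p dvd 2"
      then have "p \<le> 2" by (rule dvd_imp_le) simp
      then show False using p1 assms(3) by presburger
    qed
    ultimately show False using primes_dvd_imp_eq[OF p q] assms(5) by auto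
  qed
  define \<alpha> where "\<alpha> = 1 + z ^ q"
  have \<alpha>Z: "\<alpha> \<in> Zzp p" unfolding \<alpha>_def using z p0 by (intro Zzp_add Zzp_1 Zzp_power)
  have fact2q: "1 - z ^ (2 * q) = (1 - z ^ q) * \<alpha>" unfolding \<alpha>_def
    by (simp add: power_mult algebra_simps power2_eq_square)
  have \<alpha>nz: "\<alpha> \<noteq> 0" using fact2q z2q by auto
  define t where "t = (p + 1) div 2"
  define v where "v = (\<Sum>k<t. (z ^ (2 * q)) ^ k)"
  have vZ: "v \<in> Zzp p" unfolding v_def using z p0 by (intro Zzp_sum Zzp_power) auto
  have "2 * t = p + 1" unfolding t_def using assms(3) by presburger
  then have "(z ^ (2 * q)) ^ t = z ^ q"
  proof -
    assume h: "2 * t = p + 1"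
    have "(z ^ (2 * q)) ^ t = z ^ (q * (2 * t))" by (simp add: power_mult[symmetric] mult_ac)
    also have "\<dots> = (z ^ p) ^ q * z ^ q" unfolding h by (simp add: power_add power_mult[symmetric] mult_ac)
    also have "z ^ p = 1" unfolding z_def by (rule zeta_pow_p[OF p0])
    finally show ?thesis by simp
  qed
  then have "(1 - z ^ (2 * q)) * v = 1 - z ^ q" unfolding v_def using z2q
    by (simp add: geometric_sum field_simps)
  then have "(1 - z ^ q) * (\<alpha> * v) = (1 - z ^ q) * 1" unfolding fact2q by (simp add: mult.assoc)
  then have av: "\<alpha> * v = 1" using zq by (simp only: mult_cancel_left) simp
  have "\<alpha> \<in> Ccyc p"
    unfolding Ccyc_def Eunits_def
  proof (intro CollectI conjI bexI)
    show "\<alpha> \<in> Zzp p" by (rule \<alpha>Z)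
    show "\<alpha> * v = 1" by (rule av)
    show "v \<in> Zzp p" by (rule vZ)
    show "\<exists>i j \<omega> k. 1 - zeta p ^ j \<noteq> 0 \<and> (\<exists>n>0. \<omega> ^ n = 1) \<and>
        \<alpha> = (1 - zeta p ^ i) / (1 - zeta p ^ j) * \<omega> * (1 - zeta p) powi k"
      using zq fact2q unfolding z_def[symmetric]
      by (intro exI[of _ "2 * q"] exI[of _ q] exI[of _ 1] exI[of _ 0]) auto
  qed
  then have "in_H' p q \<alpha>" using assms(6) unfolding Eprime_def by blast
  then obtain \<delta> \<beta> \<gamma> \<beta>' \<eta> where
    d: "\<delta> \<in> Qz p" "\<delta> \<noteq> 0" and bg: "\<beta> \<in> Zzp p" "\<gamma> \<in> Zzp p"
    and H: "\<alpha> * \<delta> ^ q = \<beta> ^ q + (of_nat q)^2 * \<gamma>"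
    and b': "\<beta>' \<in> Zzp p" "\<eta> \<in> Zzp p" "\<beta> * \<beta>' - 1 = (of_nat q)^2 * \<eta>"
    unfolding in_H'_def by blast
  obtain N :: nat where N: "N > 0" "of_nat N * \<delta> \<in> Zz p" using Qz_denom[OF d(1)] by blast
  obtain a M where aM: "N = q ^ a * M" "\<not> q dvd M" using nat_decomp[OF q1 N(1)] by blast
  define d0 where "d0 = of_nat N * \<delta>"
  have d0Z: "d0 \<in> Zzp p" unfolding d0_def by (rule Zz_Zzp[OF N(2)])
  define Mc where "Mc = (of_nat M :: complex)"
  define Y where "Y = Mc ^ q * (\<beta> ^ q + (of_nat q)^2 * \<gamma>)"
  have YZ: "Y \<in> Zzp p" unfolding Y_def Mc_def using bg p0
    by (intro Zzp_mult Zzp_add Zzp_power Zzp_of_nat) auto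
  have "\<alpha> * d0 ^ q = (of_nat N)^q * (\<alpha> * \<delta> ^ q)" unfolding d0_def by (simp add: power_mult_distrib)
  also have "\<dots> = (of_nat q)^(a * q) * Y" unfolding H Y_def Mc_def aM(1)
    by (simp add: power_mult_distrib power_mult[symmetric] mult_ac)
  finally have d0eq: "\<alpha> * d0 ^ q = (of_nat q)^(a * q) * Y" .
  define e where "e = d0 / (of_nat q)^a"
  have eZ: "e \<in> Zzp p" unfolding e_def by (rule descent[OF vZ av d0Z YZ d0eq])
  have qz: "(of_nat q :: complex) \<noteq> 0" using q1 by simp
  have "(of_nat q)^(a * q) * (\<alpha> * e ^ q) = (of_nat q)^(a * q) * Y"
    using d0eq qz unfolding e_def by (simp add: power_divide power_mult[symmetric] mult_ac)
  then have eeq: "\<alpha> * e ^ q = Y" using qz by simp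
  have eqZ: "e ^ q \<in> Zzp p" using eZ by (rule Zzp_power)
  have q2Z: "(of_nat q)^2 \<in> Zzp p" by (intro Zzp_power Zzp_of_nat)
  have McZ: "Mc \<in> Zzp p" unfolding Mc_def by (rule Zzp_of_nat)
  have zZ1: "1 + z \<in> Zzp p" using z p0 by (intro Zzp_add Zzp_1)
  have one_z: "cg p (of_nat q) ((1 + z)^q) \<alpha>"
    using frob_add[OF q p0 Zzp_1 z] unfolding \<alpha>_def by simp
  have c2: "cg p (of_nat q) ((1 + z)^q * e^q) (\<alpha> * e^q)"
    by (rule cg_mult[OF one_z cg_refl p0 \<alpha>Z eqZ])
  have c3: "cg p (of_nat q) (\<alpha> * e^q) ((Mc * \<beta>)^q)"
  proof -
    have eq: "\<alpha> * e^q - (Mc * \<beta>)^q = of_nat q * (of_nat q * Mc^q * \<gamma>)"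
      unfolding eeq Y_def by (simp add: power_mult_distrib algebra_simps power2_eq_square)
    have mem: "of_nat q * Mc^q * \<gamma> \<in> Zzp p" using McZ bg by (intro Zzp_mult Zzp_power Zzp_of_nat)
    show ?thesis by (rule cgI[OF mem eq])
  qed
  have "cg p (of_nat q) ((1 + z)^q * e^q) ((Mc * \<beta>)^q)" using c2 c3 p0 by (rule cg_trans)
  then have "cg p (of_nat q) (((1 + z) * e)^q) ((Mc * \<beta>)^q)" by (simp add: power_mult_distrib)
  then have fi: "cg p (of_nat q) ((1 + z) * e) (Mc * \<beta>)"
    by (rule frob_inj[OF Zzp_mult[OF zZ1 eZ] Zzp_mult[OF McZ bg(1)]])
  have li: "cg p ((of_nat q)^2) (((1 + z) * e)^q) ((Mc * \<beta>)^q)"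
    by (rule lift[OF Zzp_mult[OF zZ1 eZ] Zzp_mult[OF McZ bg(1)] fi])
  have c4: "cg p ((of_nat q)^2) (\<alpha> * e^q) ((Mc * \<beta>)^q)"
  proof -
    have eq: "\<alpha> * e^q - (Mc * \<beta>)^q = (of_nat q)^2 * (Mc^q * \<gamma>)"
      unfolding eeq Y_def by (simp add: power_mult_distrib algebra_simps)
    have mem: "Mc^q * \<gamma> \<in> Zzp p" using McZ bg by (intro Zzp_mult Zzp_power)
    show ?thesis by (rule cgI[OF mem eq])
  qed
  have c5: "cg p ((of_nat q)^2) ((1 + z)^q * e^q) (\<alpha> * e^q)"
    using cg_trans[OF li cg_sym[OF c4] p0] by (simp add: power_mult_distrib)
  then obtain w1 where w1: "w1 \<in> Zzp p" "(1 + z)^q * e^q - \<alpha> * e^q = (of_nat q)^2 * w1"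
    by (rule cgE)
  have "coprime (int M ^ q) (int q ^ 2)"
  proof -
    have "coprime (int q) (int M)" using aM(2) q by (simp add: prime_imp_coprime)
    then show ?thesis by (simp add: coprime_commute)
  qed
  then obtain m' where "[int M ^ q * m' = 1] (mod int q ^ 2)" using cong_solve_coprime_int by blast
  then have "int q ^ 2 dvd int M ^ q * m' - 1" by (simp add: cong_iff_dvd_diff)
  then obtain tt where tt: "int M ^ q * m' - 1 = int q ^ 2 * tt" by (elim dvdE)
  have Mm: "Mc ^ q * of_int m' = 1 + (of_nat q)^2 * of_int tt"
  proof -
    have "(of_int (int M ^ q * m' - 1) :: complex) = of_int (int q ^ 2 * tt)" using tt by simp
    then show ?thesis unfolding Mc_def by (simp add: algebra_simps)
  qed
  define E where "E = \<alpha> * of_int m' * \<beta>' ^ q"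
  have EZ: "E \<in> Zzp p" unfolding E_def using \<alpha>Z b' by (intro Zzp_mult Zzp_power Zzp_of_int)
  have c7: "cg p ((of_nat q)^2) ((\<beta> * \<beta>')^q) 1"
    using cg_pow[OF cgI[OF b'(2) b'(3)] p0 Zzp_mult[OF bg(1) b'(1)] Zzp_1, of q] by simp
  have c9: "cg p ((of_nat q)^2) ((\<beta> * \<beta>')^q + (of_nat q)^2 * (\<gamma> * \<beta>'^q)) (1 + 0)"
  proof -
    have "cg p ((of_nat q)^2) ((of_nat q)^2 * (\<gamma> * \<beta>'^q)) 0"
      by (rule cgI[OF Zzp_mult[OF bg(2) Zzp_power[OF b'(1), of q]]]) simp
    then show ?thesis by (rule cg_add[OF c7 _ p0])
  qed
  have c8: "cg p ((of_nat q)^2) (1 + (of_nat q)^2 * of_int tt) 1"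
    by (rule cgI[OF Zzp_of_int[of tt]]) simp
  have c10: "cg p ((of_nat q)^2) ((1 + (of_nat q)^2 * of_int tt) * ((\<beta> * \<beta>')^q + (of_nat q)^2 * (\<gamma> * \<beta>'^q))) (1 * (1 + 0))"
    by (rule cg_mult[OF c8 c9 p0 Zzp_1])
       (intro Zzp_add Zzp_mult Zzp_power bg b' Zzp_of_nat p0)
  have "e^q * E = (\<alpha> * e^q) * (of_int m' * \<beta>'^q)" unfolding E_def by (simp add: mult_ac)
  also have "\<dots> = Y * (of_int m' * \<beta>'^q)" by (simp only: eeq)
  also have "\<dots> = (Mc ^ q * of_int m') * ((\<beta> * \<beta>')^q + (of_nat q)^2 * (\<gamma> * \<beta>'^q))"
    unfolding Y_def by (simp add: power_mult_distrib algebra_simps)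
  finally have "e^q * E = (Mc ^ q * of_int m') * ((\<beta> * \<beta>')^q + (of_nat q)^2 * (\<gamma> * \<beta>'^q))" .
  then have "cg p ((of_nat q)^2) (e^q * E) 1" using c10 unfolding Mm by simp
  then obtain w2 where w2: "w2 \<in> Zzp p" "e^q * E - 1 = (of_nat q)^2 * w2" by (rule cgE)
  define D where "D = (1 + z)^q - \<alpha>"
  have DZ: "D \<in> Zzp p" unfolding D_def using zZ1 \<alpha>Z p0 by (intro Zzp_diff Zzp_power)
  have "D = D * (e^q * E) - D * (e^q * E - 1)" by (simp add: algebra_simps)
  also have "\<dots> = ((1 + z)^q * e^q - \<alpha> * e^q) * E - D * (e^q * E - 1)"
    unfolding D_def by (simp add: algebra_simps)
  also have "\<dots> = (of_nat q)^2 * (w1 * E - D * w2)" unfolding w1(2) w2(2) by (simp add: algebra_simps)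
  finally have Deq: "D = (of_nat q)^2 * (w1 * E - D * w2)" .
  have w3Z: "w1 * E - D * w2 \<in> Zzp p" using w1 EZ DZ w2 p0 by (intro Zzp_diff Zzp_mult) auto
  then obtain W0 m where W0: "W0 \<in> Zz p" "w1 * E - D * w2 = W0 / of_nat p ^ m" by (rule Zzp_elim)
  obtain W where W: "W0 = poly (cp W) (zeta p)" using W0(1) unfolding Zz_poly by blast
  have "of_nat p ^ m * ((1 + zeta p)^q - 1 - zeta p ^ q) = (of_nat q)^2 * poly (cp W) (zeta p)"
  proof -
    have "(1 + zeta p)^q - 1 - zeta p ^ q = D" unfolding D_def \<alpha>_def z_def by simp
    also have "\<dots> = (of_nat q)^2 * (W0 / of_nat p ^ m)" using Deq W0(2) by simp
    finally show ?thesis using p0 W by (simp add: field_simps)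
  qed
  then show False by (rule final_contra[OF p q qp2 zeta_pow_p[OF p0] zeta_ne_1[OF p1]])

qed


end
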